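(* Let $\Delta:M_n\to M_n$ be a weak-2-local derivation, let $p_1,\ldots,p_n$ be mutually orthogonal minimal projections in $M_n$, and let $q=1-p_n$. Let $R\subseteq\{1,\ldots,n-1\}$ and set $r=\sum_{i\in R}p_i$ if $R\neq\emptyset$ and $r=0$ if $R=\emptyset$. Assume $\Delta(qaq+rap_n)=0$ for every $a\in M_n$, and $\Delta(e_{kn})=0$ for some $1\le k\le n-1$. Then $\Delta(qaq+rap_n+\lambda e_{kn})=0$ for every $a\in M_n$ and $\lambda\in\mathbb{C}$.
   Context: $M_n=M_n(\mathbb{C})$. For $i,j$, $e_{ij}$ is the unique minimal partial isometry in $M_n$ with $e_{ij}^*e_{ij}=p_j$ and $e_{ij}e_{ij}^*=p_i$. A derivation on $M_n$ is a linear map $D$ with $D(ab)=D(a)b+aD(b)$. A (not necessarily linear) map $\Delta:M_n\to M_n$ is a weak-2-local derivation if for every $a,b\in M_n$ and every $\phi\in M_n^*$ there exists a derivation $D_{a,b,\phi}$ such that $\phi\Delta(a)=\phi D_{a,b,\phi}(a)$ and $\phi\Delta(b)=\phi D_{a,b,\phi}(b)$. *)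

theory Defs
  imports "HOL-Analysis.Analysis"
begin

text \<open>Complex n x n matrices are modelled as complex^'n^'n with a finite index type 'n
  (so n = CARD('n)). Matrix product is **, identity is mat 1.\<close>

type_synonym 'n cmat = "complex^'n^'n"

definition cscale :: "complex \<Rightarrow> 'n::finite cmat \<Rightarrow> 'n cmat" where
  "cscale c A = (\<chi> i j. c * A $ i $ j)"

definition adj :: "'n::finite cmat \<Rightarrow> 'n cmat" where
  "adj A = (\<chi> i j. cnj (A $ j $ i))"

definition is_functional :: "('n::finite cmat \<Rightarrow> complex) \<Rightarrow> bool" where
  "is_functional f \<longleftrightarrow> (\<forall>A B. f (A + B) = f A + f B) \<and> (\<forall>c A. f (cscale c A) = c * f A)"

definition is_derivation :: "('n::finite cmat \<Rightarrow> 'n cmat) \<Rightarrow> bool" where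
  "is_derivation D \<longleftrightarrow>
     (\<forall>A B. D (A + B) = D A + D B) \<and> (\<forall>c A. D (cscale c A) = cscale c (D A)) \<and>
     (\<forall>A B. D (A ** B) = D A ** B + A ** D B)"

definition weak_2_local_derivation :: "('n::finite cmat \<Rightarrow> 'n cmat) \<Rightarrow> bool" where
  "weak_2_local_derivation \<Delta> \<longleftrightarrow>
     (\<forall>a b \<phi>. is_functional \<phi> \<longrightarrow>
        (\<exists>D. is_derivation D \<and> \<phi> (\<Delta> a) = \<phi> (D a) \<and> \<phi> (\<Delta> b) = \<phi> (D b)))"

definition is_projection :: "'n::finite cmat \<Rightarrow> bool" where
  "is_projection p \<longleftrightarrow> adj p = p \<and> p ** p = p"

definition minimal_projection :: "'n::finite cmat \<Rightarrow> bool" where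
  "minimal_projection p \<longleftrightarrow> is_projection p \<and> p \<noteq> 0 \<and>
     (\<forall>q. is_projection q \<and> q ** p = q \<longrightarrow> q = 0 \<or> q = p)"

end

theory Submission
  imports Defs
begin

definition Pm :: "'n::finite \<Rightarrow> 'n cmat" where
  "Pm i = (\<chi> a b. if a = i \<and> b = i then 1 else 0)"

lemma mrd: "((A::'n::finite cmat) + B) ** C = A ** C + B ** C"
  by (simp add: vec_eq_iff matrix_matrix_mult_def sum.distrib distrib_right)

lemma Pm_l: "(Pm i ** X) $ a $ b = (if a = i then X $ i $ b else 0)"
  by (cases "a = i") (simp_all add: matrix_matrix_mult_def Pm_def if_distrib if_distribR sum.delta'[OF finite] cong: if_cong)

lemma Pm_r: "(X ** Pm i) $ a $ b = (if b = i then X $ a $ i else 0)"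
  by (cases "b = i") (simp_all add: matrix_matrix_mult_def Pm_def if_distrib if_distribR sum.delta[OF finite] cong: if_cong)

lemma der_0: assumes "is_derivation D" shows "D 0 = 0"
proof -
  have "D (0 + 0) = D 0 + D 0" using assms unfolding is_derivation_def by blast
  thus ?thesis by simp
qed

lemma der_sum: assumes "is_derivation D" "finite S" shows "D (sum f S) = sum (\<lambda>i. D (f i)) S"
  using assms(2)
proof (induction S rule: finite_induct)
  case empty then show ?case using der_0[OF assms(1)] by simp
next
  case (insert x F) then show ?case using assms(1) unfolding is_derivation_def by simp
qed

lemma der_cyc: assumes "is_derivation D" shows "trace (D (A ** B)) = trace (D (B ** A))"
proof -
  have m: "\<And>A B. D (A ** B) = D A ** B + A ** D B" using assms unfolding is_derivation_def by blast
  show ?thesis unfolding m trace_add using trace_mul_sym[of A "D B"] trace_mul_sym[of "D A" B] by simp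
qed

lemma der_idem: assumes "is_derivation D" "P ** P = P" shows "trace (D P) = 0"
proof -
  have m: "\<And>A B. D (A ** B) = D A ** B + A ** D B" using assms unfolding is_derivation_def by blast
  have 1: "D P = D P ** P + P ** D P" using m[of P P] assms(2) by simp
  have "P ** D P ** P = P ** D P ** P + P ** D P ** P"
  proof -
    have "P ** D P ** P = P ** (D P ** P + P ** D P) ** P" using 1 by simp
    also have "\<dots> = P ** D P ** P + P ** D P ** P"
      by (simp add: matrix_add_ldistrib mrd matrix_mul_assoc assms(2))
         (simp add: matrix_mul_assoc[symmetric] assms(2))
    finally show ?thesis .
  qed
  hence 2: "P ** D P ** P = 0" by simp
  have "trace (P ** D P) = trace (P ** (P ** D P))" by (simp add: matrix_mul_assoc assms(2))
  also have "\<dots> = trace (P ** D P ** P)" using trace_mul_sym[of P "P ** D P"] by simp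
  finally have 3: "trace (P ** D P) = 0" using 2 by (simp add: trace_def)
  have "trace (D P) = trace (D P ** P) + trace (P ** D P)" using 1 trace_add by metis
  thus ?thesis using 3 trace_mul_sym[of "D P" P] by simp
qed

lemma Pm_idem: "Pm i ** Pm i = Pm i"
  by (simp add: vec_eq_iff Pm_l) (simp add: Pm_def)

lemma Pm_sand: "Pm i ** X ** Pm i = cscale (X $ i $ i) (Pm i)"
  by (simp add: vec_eq_iff Pm_l Pm_r cscale_def) (simp add: Pm_def)

lemma Pm_sum: "X = (\<Sum>i\<in>UNIV. Pm i ** X)"
  by (simp add: vec_eq_iff Pm_l sum.delta'[OF finite])

lemma der_tr: assumes "is_derivation D" shows "trace (D X) = 0"
proof -
  have c: "\<And>c A. D (cscale c A) = cscale c (D A)" using assms unfolding is_derivation_def by blast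
  have tc: "\<And>c (A::'a::finite cmat). trace (cscale c A) = c * trace A"
    by (simp add: trace_def cscale_def sum_distrib_left)
  have "trace (D X) = trace (D (\<Sum>i\<in>UNIV. Pm i ** X))" using Pm_sum[of X] by simp
  also have "\<dots> = (\<Sum>i\<in>UNIV. trace (D (Pm i ** X)))"
    by (simp add: der_sum[OF assms] trace_def sum_component) (rule sum.swap)
  also have "\<dots> = 0"
  proof (rule sum.neutral, rule ballI)
    fix i
    have "trace (D (Pm i ** X)) = trace (D (Pm i ** (Pm i ** X)))" by (simp add: matrix_mul_assoc Pm_idem)
    also have "\<dots> = trace (D (Pm i ** X ** Pm i))" using der_cyc[OF assms, of "Pm i" "Pm i ** X"] by simp
    also have "\<dots> = 0" unfolding Pm_sand c tc using der_idem[OF assms Pm_idem] by simp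
    finally show "trace (D (Pm i ** X)) = 0" .
  qed
  finally show ?thesis .
qed

lemma der_ccd: assumes "is_derivation D" shows "trace (C ** D C) = 0"
proof -
  have m: "\<And>A B. D (A ** B) = D A ** B + A ** D B" using assms unfolding is_derivation_def by blast
  have "0 = trace (D (C ** C))" using der_tr[OF assms] by simp
  also have "\<dots> = trace (D C ** C) + trace (C ** D C)" unfolding m trace_add ..
  also have "\<dots> = 2 * trace (C ** D C)" using trace_mul_sym[of "D C" C] by simp
  finally show ?thesis by simp
qed

lemma trace_zero[simp]: "trace (0::'n::finite cmat) = 0" by (simp add: trace_def)

lemma msub: "(A::'n::finite cmat) ** (B - C) = A ** B - A ** C"
  by (simp add: vec_eq_iff matrix_matrix_mult_def sum_subtractf algebra_simps)

lemma mneg: "(- A::'n::finite cmat) ** B = - (A ** B)"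
  by (simp add: vec_eq_iff matrix_matrix_mult_def sum_negf)

lemma cs_mult: "(W::'n::finite cmat) ** cscale c A = cscale c (W ** A)"
  by (simp add: vec_eq_iff matrix_matrix_mult_def cscale_def sum_distrib_left algebra_simps)

lemma cs_multl: "cscale c (A::'n::finite cmat) ** W = cscale c (A ** W)"
  by (simp add: vec_eq_iff matrix_matrix_mult_def cscale_def sum_distrib_left algebra_simps)

lemma tr_cs: "trace (cscale c (A::'n::finite cmat)) = c * trace A"
  by (simp add: trace_def cscale_def sum_distrib_left)

lemma tf_fun: "is_functional (\<lambda>X. trace ((W::'n::finite cmat) ** X))"
  unfolding is_functional_def by (simp add: matrix_add_ldistrib trace_add cs_mult tr_cs)

lemma der_diff: assumes "is_derivation D" shows "D (A - B) = D A - D B"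
proof -
  have "D ((A - B) + B) = D (A - B) + D B" using assms unfolding is_derivation_def by blast
  thus ?thesis by (simp add: algebra_simps)
qed

lemma w2_T2: assumes "weak_2_local_derivation \<Delta>"
  shows "trace ((a - b) ** \<Delta> a) = trace ((a - b) ** \<Delta> b)"
proof -
  obtain D where D: "is_derivation D" "trace ((a - b) ** \<Delta> a) = trace ((a - b) ** D a)"
    "trace ((a - b) ** \<Delta> b) = trace ((a - b) ** D b)"
    using assms tf_fun[of "a - b"] unfolding weak_2_local_derivation_def by blast
  have "trace ((a - b) ** D a) - trace ((a - b) ** D b) = trace ((a - b) ** D (a - b))"
    by (simp add: der_diff[OF D(1)] msub trace_sub)
  also have "\<dots> = 0" by (rule der_ccd[OF D(1)])
  finally show ?thesis using D by simp
qed

lemma tr_unit: "trace ((\<chi> a b. if a = j \<and> b = i then 1 else 0) ** (M::'n::finite cmat)) = M $ i $ j"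
proof -
  have "trace ((\<chi> a b. if a = j \<and> b = i then 1 else 0) ** M) = (\<Sum>a\<in>UNIV. if a = j then M $ i $ j else 0)"
    unfolding trace_def
    apply (rule sum.cong, simp)
    subgoal for a by (cases "a = j") (simp_all add: matrix_matrix_mult_def if_distrib if_distribR sum.delta[OF finite] cong: if_cong)
    done
  thus ?thesis by simp
qed

lemma zero_crit: assumes "\<And>W. trace (W ** (M::'n::finite cmat)) = 0" shows "M = 0"
proof -
  have "\<And>i j. M $ i $ j = 0" using assms tr_unit by metis
  thus ?thesis by (simp add: vec_eq_iff)
qed

lemma w2_hom: assumes "weak_2_local_derivation \<Delta>" "\<Delta> a = 0" shows "\<Delta> (cscale c a) = 0"
proof (rule zero_crit)
  fix W
  obtain D where D: "is_derivation D" "trace (W ** \<Delta> a) = trace (W ** D a)"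
    "trace (W ** \<Delta> (cscale c a)) = trace (W ** D (cscale c a))"
    using assms(1) tf_fun[of W] unfolding weak_2_local_derivation_def by blast
  have "D (cscale c a) = cscale c (D a)" using D(1) unfolding is_derivation_def by blast
  thus "trace (W ** \<Delta> (cscale c a)) = 0" using D assms(2) by (simp add: cs_mult tr_cs)
qed

lemma w2_add: assumes "weak_2_local_derivation \<Delta>" "\<Delta> a = 0" "\<Delta> b = 0" shows "\<Delta> (a + b) = 0"
proof (rule zero_crit)
  fix W
  define y where "y = a + b + W"
  have 1: "trace ((a + b - y) ** \<Delta> (a + b)) = trace ((a + b - y) ** \<Delta> y)" by (rule w2_T2[OF assms(1)])
  have e1: "a + b - y = - W" by (simp add: y_def)
  have 2: "trace ((y - cscale 2 a) ** \<Delta> y) = 0"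
    using w2_T2[OF assms(1), of y "cscale 2 a"] w2_hom[OF assms(1,2), of 2] by simp
  have 3: "trace ((y - cscale 2 b) ** \<Delta> y) = 0"
    using w2_T2[OF assms(1), of y "cscale 2 b"] w2_hom[OF assms(1,3), of 2] by simp
  have e2: "(y - cscale 2 a) + (y - cscale 2 b) = cscale 2 W"
    by (simp add: y_def vec_eq_iff cscale_def algebra_simps)
  have "trace (cscale 2 W ** \<Delta> y) = 0" using 2 3 unfolding e2[symmetric] mrd trace_add by simp
  hence "trace (W ** \<Delta> y) = 0" by (simp add: cs_multl tr_cs)
  thus "trace (W ** \<Delta> (a + b)) = 0" using 1 unfolding e1
    by (simp add: mneg trace_def sum_negf)
qed



theorem lemma2p6:
  fixes \<Delta> :: "'n::finite cmat \<Rightarrow> 'n cmat"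
    and p :: "'n \<Rightarrow> 'n cmat"
    and l k :: 'n
    and R :: "'n set"
    and e :: "'n cmat"
  assumes wl: "weak_2_local_derivation \<Delta>"
    and minp: "\<And>i. minimal_projection (p i)"
    and orth: "\<And>i j. i \<noteq> j \<Longrightarrow> p i ** p j = 0"
    and R: "R \<subseteq> UNIV - {l}"
    and hyp: "\<And>a. \<Delta> ((mat 1 - p l) ** a ** (mat 1 - p l) + sum p R ** a ** p l) = 0"
    and k: "k \<noteq> l"
    and e: "adj e ** e = p l" "e ** adj e = p k"
    and ek: "\<Delta> e = 0"
  shows "\<forall>a c. \<Delta> ((mat 1 - p l) ** a ** (mat 1 - p l) + sum p R ** a ** p l + cscale c e) = 0"
proof (intro allI)
  fix a c
  have "\<Delta> (cscale c e) = 0" by (rule w2_hom[OF wl ek])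
  thus "\<Delta> ((mat 1 - p l) ** a ** (mat 1 - p l) + sum p R ** a ** p l + cscale c e) = 0"
    using w2_add[OF wl hyp] by blast
qed

end
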